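(* Let $m\geq 1$, $n\geq 3$ and $p\geq 2$ be integers. For all vertices $i,j$ of the oriented Dutch windmill graph $D^m_n$, the number of walks in $D^m_n$ of length $pn-1$ from $i$ to $j$ is $m^{p-1}$ times the number of walks of length $n-1$ from $i$ to $j$.
   Context: For integers $m\geq 1$, $n\geq 3$, the oriented Dutch windmill graph $D^m_n$ is the directed graph with vertex set $V=\{1,2,\ldots,m(n-1)+1\}$ whose directed edges $(a,b)$ are exactly: $(1,(k-1)(n-1)+2)$ for $k\in\{1,\ldots,m\}$; $((k-1)(n-1)+i,(k-1)(n-1)+i+1)$ for $k\in\{1,\ldots,m\}$ and $i\in\{2,\ldots,n-1\}$; and $((k-1)(n-1)+n,1)$ for $k\in\{1,\ldots,m\}$. A walk is a sequence of vertices $\langle v_1,\ldots,v_r\rangle$ in which each $(v_t,v_{t+1})$ is an edge; its length is $r-1$; walks are distinct when they are distinct sequences. *)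

theory Defs
  imports Main
begin

definition dw_vertices :: "nat \<Rightarrow> nat \<Rightarrow> nat set" where
  "dw_vertices m n = {1 .. m * (n - 1) + 1}"

definition dw_edges :: "nat \<Rightarrow> nat \<Rightarrow> (nat \<times> nat) set" where
  "dw_edges m n =
     {(1, (k - 1) * (n - 1) + 2) | k. k \<in> {1..m}}
   \<union> {((k - 1) * (n - 1) + i, (k - 1) * (n - 1) + i + 1) | k i. k \<in> {1..m} \<and> i \<in> {2..n - 1}}
   \<union> {((k - 1) * (n - 1) + n, 1) | k. k \<in> {1..m}}"

definition is_walk :: "(nat \<times> nat) set \<Rightarrow> nat list \<Rightarrow> bool" where
  "is_walk E w \<longleftrightarrow> w \<noteq> [] \<and> (\<forall>t. Suc t < length w \<longrightarrow> (w ! t, w ! Suc t) \<in> E)"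

definition dw_walks :: "nat \<Rightarrow> nat \<Rightarrow> nat \<Rightarrow> nat \<Rightarrow> nat \<Rightarrow> nat list set" where
  "dw_walks m n L i j =
     {w. is_walk (dw_edges m n) w \<and> length w = L + 1 \<and> hd w = i \<and> last w = j}"

end

theory Submission
  imports Defs
begin

lemma is_walk_Cons:
  "is_walk E (x # w) \<longleftrightarrow> (w = [] \<or> ((x, hd w) \<in> E \<and> is_walk E w))"
proof
  assume a: "is_walk E (x # w)"
  show "w = [] \<or> ((x, hd w) \<in> E \<and> is_walk E w)"
  proof (cases w)
    case Nil then show ?thesis by simp
  next
    case (Cons y ys)
    have "Suc 0 < length (x # w)" using Cons by simp
    then have "((x # w) ! 0, (x # w) ! Suc 0) \<in> E" using a unfolding is_walk_def by blast
    then have "(x, y) \<in> E" using Cons by simp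
    moreover have "is_walk E w" unfolding is_walk_def
    proof (intro conjI allI impI)
      show "w \<noteq> []" using Cons by simp
      fix t assume "Suc t < length w"
      then have "Suc (Suc t) < length (x # w)" by simp
      then have "((x#w) ! Suc t, (x#w) ! Suc (Suc t)) \<in> E" using a unfolding is_walk_def by blast
      then show "(w ! t, w ! Suc t) \<in> E" by simp
    qed
    ultimately show ?thesis using Cons by simp
  qed
next
  assume a: "w = [] \<or> ((x, hd w) \<in> E \<and> is_walk E w)"
  show "is_walk E (x # w)" unfolding is_walk_def
  proof (intro conjI allI impI)
    show "x # w \<noteq> []" by simp
    fix t assume t: "Suc t < length (x # w)"
    then have wne: "w \<noteq> []" by auto
    with a have e: "(x, hd w) \<in> E" and iw: "is_walk E w" by auto
    show "((x # w) ! t, (x # w) ! Suc t) \<in> E"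
    proof (cases t)
      case 0 then show ?thesis using e wne by (simp add: hd_conv_nth)
    next
      case (Suc t') then show ?thesis using iw t unfolding is_walk_def by simp
    qed
  qed
qed

lemma walks_Suc:
  "dw_walks m n (Suc L) i j = Cons i ` (\<Union>s \<in> {s. (i, s) \<in> dw_edges m n}. dw_walks m n L s j)"
proof
  show "dw_walks m n (Suc L) i j \<subseteq> Cons i ` (\<Union>s \<in> {s. (i, s) \<in> dw_edges m n}. dw_walks m n L s j)"
  proof
    fix w assume "w \<in> dw_walks m n (Suc L) i j"
    then have w: "is_walk (dw_edges m n) w" "length w = Suc L + 1" "hd w = i" "last w = j"
      unfolding dw_walks_def by auto
    then obtain w' where w': "w = i # w'" by (cases w) auto
    with w have "w' \<noteq> []" by auto
    with w w' have "(i, hd w') \<in> dw_edges m n" "is_walk (dw_edges m n) w'" "length w' = L + 1" "last w' = j"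
      by (auto simp: is_walk_Cons)
    then have "w' \<in> dw_walks m n L (hd w') j" unfolding dw_walks_def by auto
    then show "w \<in> Cons i ` (\<Union>s \<in> {s. (i, s) \<in> dw_edges m n}. dw_walks m n L s j)"
      using w' \<open>(i, hd w') \<in> dw_edges m n\<close> by blast
  qed
next
  show "Cons i ` (\<Union>s \<in> {s. (i, s) \<in> dw_edges m n}. dw_walks m n L s j) \<subseteq> dw_walks m n (Suc L) i j"
  proof
    fix w assume "w \<in> Cons i ` (\<Union>s \<in> {s. (i, s) \<in> dw_edges m n}. dw_walks m n L s j)"
    then obtain s w' where "w = i # w'" "(i, s) \<in> dw_edges m n" "w' \<in> dw_walks m n L s j" by auto
    then show "w \<in> dw_walks m n (Suc L) i j" unfolding dw_walks_def by (auto simp: is_walk_Cons)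
  qed
qed

lemma card_walks_Suc_single:
  assumes "{s. (i, s) \<in> dw_edges m n} = {s0}"
  shows "card (dw_walks m n (Suc L) i j) = card (dw_walks m n L s0 j)"
  using assms by (simp add: walks_Suc card_image)

lemma edge_iff: "(x,y) \<in> dw_edges m n \<longleftrightarrow>
   (x = 1 \<and> (\<exists>k\<in>{1..m}. y = (k-1)*(n-1)+2))
 \<or> (\<exists>k\<in>{1..m}. \<exists>i\<in>{2..n-1}. x = (k-1)*(n-1)+i \<and> y = (k-1)*(n-1)+i+1)
 \<or> (y = 1 \<and> (\<exists>k\<in>{1..m}. x = (k-1)*(n-1)+n))"
  unfolding dw_edges_def by (simp only: Un_iff mem_Collect_eq prod.inject) blast

lemma b_inj:
  fixes n k k' t t' :: nat
  assumes "n \<ge> 3" "2 \<le> t" "t \<le> n" "2 \<le> t'" "t' \<le> n"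
    and "(k-1)*(n-1)+t = (k'-1)*(n-1)+t'"
  shows "k - 1 = k' - 1 \<and> t = t'"
proof -
  have q: "n - 1 > 0" using assms by simp
  have e: "(k-1)*(n-1)+(t-2) = (k'-1)*(n-1)+(t'-2)" using assms by simp
  have r1: "t - 2 < n - 1" "t' - 2 < n - 1" using assms by auto
  have "((k-1)*(n-1)+(t-2)) div (n-1) = k - 1" using r1 q by simp
  moreover have "((k'-1)*(n-1)+(t'-2)) div (n-1) = k' - 1" using r1 q by simp
  ultimately have "k - 1 = k' - 1" using e by simp
  then show ?thesis using e assms by simp
qed

lemma succ_center:
  assumes "n \<ge> 3"
  shows "{s. (1, s) \<in> dw_edges m n} = (\<lambda>k. (k-1)*(n-1)+2) ` {1..m}"
proof
  show "(\<lambda>k. (k-1)*(n-1)+2) ` {1..m} \<subseteq> {s. (1, s) \<in> dw_edges m n}"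
    unfolding edge_iff by blast
  show "{s. (1, s) \<in> dw_edges m n} \<subseteq> (\<lambda>k. (k-1)*(n-1)+2) ` {1..m}"
  proof
    fix s assume "s \<in> {s. (1, s) \<in> dw_edges m n}"
    then have "(1::nat, s) \<in> dw_edges m n" by simp
    then consider (a) k where "k \<in> {1..m}" "s = (k-1)*(n-1)+2"
      | (b) k' i' where "i' \<in> {2..n-1}" "(1::nat) = (k'-1)*(n-1)+i'"
      | (c) k' where "(1::nat) = (k'-1)*(n-1)+n"
      unfolding edge_iff by blast
    then show "s \<in> (\<lambda>k. (k-1)*(n-1)+2) ` {1..m}"
    proof cases
      case a then show ?thesis by blast
    next
      case b then show ?thesis by simp
    next
      case c then show ?thesis using assms by simp
    qed
  qed
qed

lemma succ_mid:
  assumes "n \<ge> 3" "1 \<le> k" "k \<le> m" "2 \<le> t" "t < n"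
  shows "{s. ((k-1)*(n-1)+t, s) \<in> dw_edges m n} = {(k-1)*(n-1)+t+1}"
proof
  have "k \<in> {1..m}" "t \<in> {2..n-1}" using assms by auto
  then show "{(k-1)*(n-1)+t+1} \<subseteq> {s. ((k-1)*(n-1)+t, s) \<in> dw_edges m n}"
    unfolding edge_iff by blast
  show "{s. ((k-1)*(n-1)+t, s) \<in> dw_edges m n} \<subseteq> {(k-1)*(n-1)+t+1}"
  proof
    fix s assume "s \<in> {s. ((k-1)*(n-1)+t, s) \<in> dw_edges m n}"
    then have "((k-1)*(n-1)+t, s) \<in> dw_edges m n" by simp
    then consider (a) "(k-1)*(n-1)+t = 1"
      | (b) k' i' where "i' \<in> {2..n-1}" "(k-1)*(n-1)+t = (k'-1)*(n-1)+i'" "s = (k'-1)*(n-1)+i'+1"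
      | (c) k' where "(k-1)*(n-1)+t = (k'-1)*(n-1)+n"
      unfolding edge_iff by blast
    then show "s \<in> {(k-1)*(n-1)+t+1}"
    proof cases
      case a then show ?thesis using assms by simp
    next
      case b then show ?thesis by simp
    next
      case c
      then have "t = n" using b_inj[of n t n k k'] assms by simp
      then show ?thesis using assms by simp
    qed
  qed
qed

lemma succ_end:
  assumes "n \<ge> 3" "1 \<le> k" "k \<le> m"
  shows "{s. ((k-1)*(n-1)+n, s) \<in> dw_edges m n} = {1}"
proof
  have "k \<in> {1..m}" using assms by auto
  then show "{1} \<subseteq> {s. ((k-1)*(n-1)+n, s) \<in> dw_edges m n}"
    unfolding edge_iff by blast
  show "{s. ((k-1)*(n-1)+n, s) \<in> dw_edges m n} \<subseteq> {1}"
  proof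
    fix s assume "s \<in> {s. ((k-1)*(n-1)+n, s) \<in> dw_edges m n}"
    then have "((k-1)*(n-1)+n, s) \<in> dw_edges m n" by simp
    then consider (a) "(k-1)*(n-1)+n = 1"
      | (b) k' i' where "i' \<in> {2..n-1}" "(k-1)*(n-1)+n = (k'-1)*(n-1)+i'"
      | (c) "s = 1"
      unfolding edge_iff by blast
    then show "s \<in> {1}"
    proof cases
      case a then show ?thesis using assms by simp
    next
      case b
      have "i' \<le> n" using b by auto
      then have "n = i'" using b_inj[of n n i' k k'] assms b by simp
      then show ?thesis using b assms by simp
    next
      case c then show ?thesis by simp
    qed
  qed
qed

lemma fin_edges: "finite (dw_edges m n)"
  unfolding dw_edges_def
  by (intro finite_UnI finite_image_set finite_image_set2) auto

lemma fin_walks: "finite (dw_walks m n L s j)"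
proof (induction L arbitrary: s)
  case 0
  have "dw_walks m n 0 s j \<subseteq> {[s]}"
  proof
    fix w assume "w \<in> dw_walks m n 0 s j"
    then have "length w = 1" "hd w = s" unfolding dw_walks_def by auto
    then show "w \<in> {[s]}" by (cases w) auto
  qed
  then show ?case by (rule finite_subset) simp
next
  case (Suc L)
  have "finite {t. (s, t) \<in> dw_edges m n}"
    by (rule finite_subset[of _ "snd ` dw_edges m n"]) (force, simp add: fin_edges)
  then show ?case unfolding walks_Suc using Suc by simp
qed

lemma chain_aux:
  assumes n3: "n \<ge> 3" and k: "1 \<le> k" "k \<le> m"
  shows "n - t = d \<Longrightarrow> 2 \<le> t \<Longrightarrow> t \<le> n \<Longrightarrow>
    card (dw_walks m n (L + (n + 1 - t)) ((k-1)*(n-1)+t) j) = card (dw_walks m n L 1 j)"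
proof (induction d arbitrary: t)
  case 0
  then have tn: "t = n" by simp
  have "card (dw_walks m n (L + (n + 1 - t)) ((k-1)*(n-1)+t) j)
      = card (dw_walks m n (Suc L) ((k-1)*(n-1)+n) j)" using tn by (simp only: tn diff_Suc_diff_eq1) simp
  also have "\<dots> = card (dw_walks m n L 1 j)"
    by (rule card_walks_Suc_single[OF succ_end[OF n3 k]])
  finally show ?case .
next
  case (Suc d)
  then have tn: "t < n" by simp
  have h: "n - (t+1) = d" "2 \<le> t+1" "t+1 \<le> n" using Suc.prems tn by auto
  have IH: "card (dw_walks m n (L + (n + 1 - (t+1))) ((k-1)*(n-1)+(t+1)) j) = card (dw_walks m n L 1 j)"
    by (rule Suc.IH[OF h])
  have e1: "L + (n + 1 - t) = Suc (L + (n + 1 - (t+1)))" using tn by simp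
  have e2: "(k-1)*(n-1)+(t+1) = (k-1)*(n-1)+t+1" by simp
  have "card (dw_walks m n (L + (n + 1 - t)) ((k-1)*(n-1)+t) j)
      = card (dw_walks m n (Suc (L + (n + 1 - (t+1)))) ((k-1)*(n-1)+t) j)" by (simp only: e1)
  also have "\<dots> = card (dw_walks m n (L + (n + 1 - (t+1))) ((k-1)*(n-1)+t+1) j)"
    by (rule card_walks_Suc_single[OF succ_mid[OF n3 k Suc.prems(2) tn]])
  also have "\<dots> = card (dw_walks m n L 1 j)" using IH by (simp only: e2)
  finally show ?case .
qed

lemma chain:
  assumes "n \<ge> 3" "1 \<le> k" "k \<le> m" "2 \<le> t" "t \<le> n"
  shows "card (dw_walks m n (L + (n + 1 - t)) ((k-1)*(n-1)+t) j) = card (dw_walks m n L 1 j)"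
  using chain_aux[OF assms(1-3) refl assms(4,5)] .

lemma center_step:
  assumes "n \<ge> 3"
  shows "card (dw_walks m n (L + n) 1 j) = m * card (dw_walks m n L 1 j)"
proof -
  let ?b = "\<lambda>k::nat. (k-1)*(n-1)+2"
  have eq: "L + n = Suc (L + (n + 1 - 2))" using assms by simp
  have inj: "inj_on ?b {1..m}"
  proof
    fix x y assume "x \<in> {1..m}" "y \<in> {1..m}" "?b x = ?b y"
    then show "x = y" using b_inj[of n 2 2 x y] assms by auto
  qed
  note fin = fin_walks
  have "card (dw_walks m n (L + n) 1 j) = card (\<Union>s \<in> ?b ` {1..m}. dw_walks m n (L + (n + 1 - 2)) s j)"
    unfolding eq walks_Suc succ_center[OF assms] by (simp add: card_image)
  also have "\<dots> = (\<Sum>s \<in> ?b ` {1..m}. card (dw_walks m n (L + (n + 1 - 2)) s j))"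
    by (rule card_UN_disjoint) (simp, simp add: fin, auto simp: dw_walks_def)
  also have "\<dots> = (\<Sum>k \<in> {1..m}. card (dw_walks m n (L + (n + 1 - 2)) (?b k) j))"
    using sum.reindex[OF inj] by simp
  also have "\<dots> = (\<Sum>k \<in> {1..m}. card (dw_walks m n L 1 j))"
  proof (rule sum.cong)
    fix k assume "k \<in> {1..m}"
    then show "card (dw_walks m n (L + (n + 1 - 2)) (?b k) j) = card (dw_walks m n L 1 j)"
      using chain[of n k m 2 L j] assms by auto
  qed simp
  finally show ?thesis by simp
qed

lemma center_rep:
  assumes "n \<ge> 3"
  shows "card (dw_walks m n (L + q * n) 1 j) = m ^ q * card (dw_walks m n L 1 j)"
proof (induction q)
  case 0 then show ?case by simp
next
  case (Suc q)
  have e: "L + Suc q * n = (L + q * n) + n" by simp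
  have "card (dw_walks m n ((L + q * n) + n) 1 j) = m * card (dw_walks m n (L + q * n) 1 j)"
    by (rule center_step[OF assms])
  also have "\<dots> = m * (m ^ q * card (dw_walks m n L 1 j))" using Suc.IH by simp
  finally show ?case unfolding e by simp
qed

lemma start:
  assumes "n \<ge> 3" "i \<in> dw_vertices m n"
  shows "\<exists>d \<le> n - 1. \<forall>L. card (dw_walks m n (L + d) i j) = card (dw_walks m n L 1 j)"
proof (cases "i = 1")
  case True then show ?thesis by (intro exI[of _ 0]) simp
next
  case False
  with assms have i: "2 \<le> i" "i \<le> m * (n - 1) + 1" unfolding dw_vertices_def by auto
  define k where "k = (i - 2) div (n - 1) + 1"
  define t where "t = (i - 2) mod (n - 1) + 2"
  have q: "n - 1 > 0" using assms by simp
  have "i - 2 < m * (n - 1)" using i by simp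
  then have "(i - 2) div (n - 1) < m" by (simp add: less_mult_imp_div_less)
  then have k: "1 \<le> k" "k \<le> m" unfolding k_def by auto
  have "(i - 2) mod (n - 1) < n - 1" using q by simp
  then have t: "2 \<le> t" "t \<le> n" unfolding t_def by auto
  have "(k - 1) * (n - 1) + t = ((i - 2) div (n - 1)) * (n - 1) + (i - 2) mod (n - 1) + 2"
    unfolding k_def t_def by simp
  also have "\<dots> = i" using i by (simp add: div_mult_mod_eq)
  finally have ie: "i = (k - 1) * (n - 1) + t" by simp
  show ?thesis
  proof (intro exI[of _ "n + 1 - t"] conjI allI)
    show "n + 1 - t \<le> n - 1" using t by simp
    fix L show "card (dw_walks m n (L + (n + 1 - t)) i j) = card (dw_walks m n L 1 j)"
      unfolding ie by (rule chain) (use assms k t in auto)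
  qed
qed

theorem proposition2p8:
  fixes m n p i j :: nat
  assumes "m \<ge> 1" and "n \<ge> 3" and "p \<ge> 2"
    and "i \<in> dw_vertices m n" and "j \<in> dw_vertices m n"
  shows "card (dw_walks m n (p * n - 1) i j) = m ^ (p - 1) * card (dw_walks m n (n - 1) i j)"
proof -
  obtain d where d: "d \<le> n - 1" and D: "\<And>L. card (dw_walks m n (L + d) i j) = card (dw_walks m n L 1 j)"
    using start[OF assms(2) assms(4)] by blast
  obtain p' where p': "p = Suc p'" using assms(3) by (cases p) auto
  have e1: "p * n - 1 = ((n - 1 - d) + p' * n) + d" using d assms(2) p' by (simp add: algebra_simps)
  have e2: "n - 1 = (n - 1 - d) + d" using d by simp
  have "card (dw_walks m n (p * n - 1) i j) = card (dw_walks m n ((n - 1 - d) + p' * n) 1 j)"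
    unfolding e1 by (rule D)
  also have "\<dots> = m ^ p' * card (dw_walks m n (n - 1 - d) 1 j)"
    by (rule center_rep[OF assms(2)])
  also have "card (dw_walks m n (n - 1 - d) 1 j) = card (dw_walks m n (n - 1) i j)"
    by (subst e2, rule D[symmetric])
  finally show ?thesis using p' by simp
qed

end
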